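(* Let $(x_K)_{K\ge1}\subseteq\{0,1\}^{\mathbb Z}$ be a coordinatewise non-increasing sequence with coordinatewise limit $x$, which is good: there is an increasing sequence $(N_i)$ such that for every $K\in\mathbb N\cup\{\infty\}$ (with $x_\infty=x$), $x_K$ is quasi-generic along $(N_i)$ for some measure $\nu_K$, and $\nu_K(1)\to\nu_\infty(1)$. Suppose that for each $K\ge1$ the subshift $\overline{[\mathbf 0,x_K]}$ is a measure-theoretically subordinate subshift with base measure $\nu_K$. Then both $\bigcap_{K\ge1}\overline{[\mathbf 0,x_K]}$ and $\overline{[\mathbf 0,x]}$ are measure-theoretically subordinate subshifts with base measure $\nu_\infty=\lim_{K\to\infty}\nu_K$.
   Context: $\sigma$ is the left shift on $\{0,1\}^{\mathbb Z}$; a subshift is a closed $\sigma$-invariant set; $\mathcal M(Y)$ is the set of shift-invariant Borel probability measures on $Y$; $\mu(1)=\mu(\{x:x_0=1\})$. A point $y$ is quasi-generic for $\mu$ along $(N_i)$ if $\frac1{N_i}\sum_{n\le N_i}\delta_{\sigma^ny}\to\mu$ weakly. For $w\le x$ (coordinatewise) in $\{0,1\}^{\mathbb Z}$, $\overline{[w,x]}$ denotes the closure of $\{\sigma^ny: w\le y\le x,\ n\in\mathbb Z\}$; $\mathbf 0$ is the all-zero sequence. Let $M$ be coordinatewise multiplication and $\pi_1$ the first-coordinate projection. A subshift $X\subseteq\{0,1\}^{\mathbb Z}$ is a measure-theoretically subordinate subshift if there exists $\nu\in\mathcal M(\{0,1\}^{\mathbb Z})$ with $\mathcal M(X)=\{M_*(\lambda):\lambda\in\mathcal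 M(\{0,1\}^{\mathbb Z}\times\{0,1\}^{\mathbb Z},\sigma\times\sigma),\ (\pi_1)_*\lambda=\nu\}$; any such $\nu$ is a base measure. *)

theory Defs
  imports "HOL-Probability.Probability"
begin

text \<open>Points of {0,1}^Z are functions int => bool (True = 1), with the product
topology (bool is discrete). Borel sets are taken w.r.t. this topology.\<close>

type_synonym cfg = "int \<Rightarrow> bool"

definition shift :: "cfg \<Rightarrow> cfg" where
  "shift y = (\<lambda>m. y (m + 1))"

definition shift_by :: "int \<Rightarrow> cfg \<Rightarrow> cfg" where
  "shift_by n y = (\<lambda>m. y (m + n))"

definition subshift :: "cfg set \<Rightarrow> bool" where
  "subshift X \<longleftrightarrow> closed X \<and> shift ` X \<subseteq> X \<and> X \<subseteq> shift ` X"

text \<open>closure of the orbits of all y with 0 <= y <= x (coordinatewise; 0 <= y is automatic)\<close>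
definition interval_orbit_closure :: "cfg \<Rightarrow> cfg set" where
  "interval_orbit_closure x = closure {shift_by n y | n y. y \<le> x}"

definition inv_measures :: "cfg set \<Rightarrow> cfg measure set" where
  "inv_measures X = {\<mu>. sets \<mu> = sets borel \<and> prob_space \<mu> \<and>
      distr \<mu> borel shift = \<mu> \<and> X \<in> sets \<mu> \<and> measure \<mu> X = 1}"

definition one_freq :: "cfg measure \<Rightarrow> real" where
  "one_freq \<mu> = measure \<mu> {y. y 0}"

definition coord_mult :: "cfg \<times> cfg \<Rightarrow> cfg" where
  "coord_mult p = (\<lambda>n. fst p n \<and> snd p n)"

definition subordinate_measures :: "cfg measure \<Rightarrow> cfg measure set" where
  "subordinate_measures \<nu> =
     {distr L borel coord_mult | L :: (cfg \<times> cfg) measure.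
        sets L = sets borel \<and> prob_space L \<and>
        distr L borel (map_prod shift shift) = L \<and>
        distr L borel fst = \<nu>}"

definition mts_subshift_with_base :: "cfg set \<Rightarrow> cfg measure \<Rightarrow> bool" where
  "mts_subshift_with_base X \<nu> \<longleftrightarrow> subshift X \<and> \<nu> \<in> inv_measures UNIV \<and>
      inv_measures X = subordinate_measures \<nu>"

definition mts_subshift :: "cfg set \<Rightarrow> bool" where
  "mts_subshift X \<longleftrightarrow> (\<exists>\<nu>. mts_subshift_with_base X \<nu>)"

definition weak_conv_seq :: "(nat \<Rightarrow> cfg measure) \<Rightarrow> cfg measure \<Rightarrow> bool" where
  "weak_conv_seq \<mu>s \<mu> \<longleftrightarrow> (\<forall>f :: cfg \<Rightarrow> real. continuous_on UNIV f \<longrightarrow>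
      (\<lambda>i. integral\<^sup>L (\<mu>s i) f) \<longlonglongrightarrow> integral\<^sup>L \<mu> f)"

definition quasi_generic :: "cfg \<Rightarrow> cfg measure \<Rightarrow> (nat \<Rightarrow> nat) \<Rightarrow> bool" where
  "quasi_generic y \<mu> N \<longleftrightarrow> sets \<mu> = sets borel \<and> prob_space \<mu> \<and>
     (\<forall>f :: cfg \<Rightarrow> real. continuous_on UNIV f \<longrightarrow>
       (\<lambda>i. (1 / real (N i)) * (\<Sum>n\<in>{1..N i}. f (shift_by (int n) y)))
         \<longlonglongrightarrow> integral\<^sup>L \<mu> f)"

end

theory Submission
  imports Defs "HOL-Analysis.Function_Metric"
begin

lemma compact_cfg: "compact (UNIV::cfg set)"
proof -
  have "compact_space (product_topology (\<lambda>i::int. (euclidean :: bool topology)) UNIV)"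
  proof -
    have "compact_space (euclidean :: bool topology)"
      by (simp add: compact_space_def finite_imp_compact)
    then show ?thesis by (simp add: compact_space_product_topology)
  qed
  then have "compact_space (euclidean :: cfg topology)"
    by (simp add: euclidean_product_topology)
  then show ?thesis
    by (simp add: compact_space_def compactin_euclidean_iff)
qed

lemma compact_cfg2: "compact (UNIV::(cfg\<times>cfg) set)"
  using compact_Times[OF compact_cfg compact_cfg] by simp

lemma open_finite_t1: "open (A::'a::{finite,t1_space} set)"
  using finite_imp_closed[of "-A"] by (simp add: closed_def)

lemma cont_from_finite: "continuous_on S (f::'a::{finite,t1_space} \<Rightarrow> 'b::topological_space)"
  unfolding continuous_on_open_invariant
proof (intro allI impI)
  fix B :: "'b set" show "\<exists>A. open A \<and> A \<inter> S = f -` B \<inter> S"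
    by (intro exI[of _ "f -` B"]) (simp add: open_finite_t1)
qed

lemma cont_shift_by: "continuous_on UNIV (shift_by n)"
  unfolding shift_by_def by (intro continuous_on_coordinatewise_then_product continuous_on_product_coordinates)

lemma cont_shift: "continuous_on UNIV shift"
  unfolding shift_def by (intro continuous_on_coordinatewise_then_product continuous_on_product_coordinates)

lemma cont_coord_mult: "continuous_on UNIV coord_mult"
  unfolding coord_mult_def
proof (intro continuous_on_coordinatewise_then_product)
  fix i
  have "continuous_on UNIV (\<lambda>p::cfg\<times>cfg. (fst p i, snd p i))"
    by (intro continuous_intros continuous_on_compose2[OF continuous_on_product_coordinates]) auto
  then show "continuous_on UNIV (\<lambda>p::cfg\<times>cfg. fst p i \<and> snd p i)"
    using continuous_on_compose2[OF cont_from_finite[of UNIV "\<lambda>(a::bool,b::bool). a \<and> b"], of UNIV "\<lambda>p::cfg\<times>cfg. (fst p i, snd p i)"]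
    by auto
qed

lemma cont_map_prod_shift: "continuous_on UNIV (map_prod shift shift)"
proof -
  have "map_prod shift shift = (\<lambda>p. (shift (fst p), shift (snd p)))" by (auto simp: fun_eq_iff)
  then show ?thesis
    by (simp only:) (intro continuous_on_Pair continuous_on_compose2[OF cont_shift] continuous_on_fst continuous_on_snd continuous_on_id; simp)
qed

lemma cont_coord: "continuous_on UNIV (\<lambda>y::cfg. y i)"
  by simp


definition tern :: "(nat \<Rightarrow> bool) \<Rightarrow> real" where
  "tern a = (\<Sum>n. (if a n then 1 else 0) * (1/3::real)^n)"

lemma summable_tern: "summable (\<lambda>n. (if a n then 1 else 0) * (1/3::real)^n)"
  by (rule summable_comparison_test[OF _ summable_geometric[of "1/3::real"]]) auto

lemma cont_tern: "continuous_on UNIV tern"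
proof -
  have ul: "uniform_limit UNIV (\<lambda>k a. \<Sum>i<k. (if a i then 1 else 0) * (1/3::real)^i) tern sequentially"
    unfolding tern_def
    by (rule Weierstrass_m_test[OF _ summable_geometric[of "1/3::real"]]) auto
  have c: "continuous_on UNIV (\<lambda>a::nat\<Rightarrow>bool. \<Sum>i<k. (if a i then 1 else 0) * (1/3::real)^i)" for k
  proof (intro continuous_on_sum continuous_on_mult continuous_on_const)
    fix i
    show "continuous_on UNIV (\<lambda>a::nat\<Rightarrow>bool. if a i then 1 else (0::real))"
      using continuous_on_compose2[OF cont_from_finite[of UNIV "\<lambda>b::bool. if b then 1 else (0::real)"]
          continuous_on_product_coordinates[of i]] by auto
  qed
  show ?thesis by (rule uniform_limit_theorem[OF always_eventually ul]) (use c in auto)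
qed

lemma tern_diff_pos:
  assumes "a n" "\<not> b n" "\<And>m. m < n \<Longrightarrow> a m = b m"
  shows "tern b < tern a"
proof -
  define d where "d m = ((if a m then 1 else 0) - (if b m then 1 else 0)) * (1/3::real)^m" for m
  have sd: "summable d"
    unfolding d_def left_diff_distrib using summable_tern
    by (intro summable_diff) auto
  have eq: "tern a - tern b = suminf d"
    unfolding tern_def d_def left_diff_distrib
    by (rule suminf_diff) (rule summable_tern)+
  have split: "suminf d = (\<Sum>i. d (i + Suc n)) + (\<Sum>i<Suc n. d i)"
    by (rule suminf_split_initial_segment[OF sd])
  have init: "(\<Sum>i<Suc n. d i) = (1/3)^n"
  proof -
    have "(\<Sum>i<n. d i) = 0" using assms(3) by (auto simp: d_def intro!: sum.neutral)
    then show ?thesis using assms(1,2) by (simp add: d_def)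
  qed
  have sd2: "summable (\<lambda>i. d (i + Suc n))" using summable_ignore_initial_segment[OF sd, of "Suc n"] by simp
  have sg: "summable (\<lambda>i. (1/3::real)^(i + Suc n))"
    using summable_ignore_initial_segment[OF summable_geometric[of "1/3::real"], of "Suc n"] by simp
  have "(\<Sum>i. - ((1/3::real)^(i + Suc n))) \<le> (\<Sum>i. d (i + Suc n))"
    by (intro suminf_le sd2 summable_minus sg) (auto simp: d_def)
  moreover have "(\<Sum>i. - ((1/3::real)^(i + Suc n))) = - ((1/3)^n / 2)"
  proof -
    have "(\<lambda>i. (1/3::real)^(i + Suc n)) = (\<lambda>i. (1/3)^Suc n * (1/3)^i)"
      by (rule ext) (metis add.commute power_add)
    then have "(\<Sum>i. (1/3::real)^(i + Suc n)) = (1/3)^Suc n * (\<Sum>i. (1/3)^i)"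
      using suminf_mult[OF summable_geometric[of "1/3::real"], of "(1/3)^Suc n"] by (simp del: power_Suc)
    also have "\<dots> = (1/3)^n / 2" by (simp add: suminf_geometric)
    finally show ?thesis using suminf_minus[OF sg] by simp
  qed
  ultimately have "tern a - tern b \<ge> (1/3)^n - (1/3)^n/2"
    using eq split init by linarith
  moreover have "(1/3::real)^n > 0" by simp
  ultimately show ?thesis by linarith
qed

lemma inj_tern: "inj tern"
proof (rule injI, rule ccontr)
  fix a b assume eq: "tern a = tern b" and ne: "a \<noteq> b"
  then obtain k where "a k \<noteq> b k" by auto
  define n where "n = (LEAST n. a n \<noteq> b n)"
  have n: "a n \<noteq> b n" using \<open>a k \<noteq> b k\<close> unfolding n_def by (rule LeastI)
  have lt: "\<And>m. m < n \<Longrightarrow> a m = b m" unfolding n_def using not_less_Least by blast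
  show False
  proof (cases "a n")
    case True then show False using tern_diff_pos[of a n b] n lt eq by auto
  next
    case False then show False using tern_diff_pos[of b n a] n lt eq by auto
  qed
qed

definition enc :: "cfg \<times> cfg \<Rightarrow> nat \<Rightarrow> bool" where
  "enc p n = (if snd (from_nat n :: int \<times> bool) then fst p (fst (from_nat n :: int \<times> bool))
     else snd p (fst (from_nat n :: int \<times> bool)))"

lemma inj_enc: "inj enc"
proof (rule injI)
  fix p q assume e: "enc p = enc q"
  have "fst p m = fst q m \<and> snd p m = snd q m" for m
    using fun_cong[OF e, of "to_nat (m, True)"] fun_cong[OF e, of "to_nat (m, False)"]
    by (simp add: enc_def)
  then show "p = q" by (simp add: prod_eq_iff fun_eq_iff)
qed

lemma cont_enc: "continuous_on UNIV enc"
  unfolding enc_def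
proof (intro continuous_on_coordinatewise_then_product)
  fix n
  show "continuous_on UNIV (\<lambda>p::cfg\<times>cfg. if snd (from_nat n :: int \<times> bool) then fst p (fst (from_nat n :: int \<times> bool))
     else snd p (fst (from_nat n :: int \<times> bool)))"
    by (cases "snd (from_nat n :: int \<times> bool)")
      (auto intro!: continuous_on_compose2[OF continuous_on_product_coordinates continuous_on_fst]
           continuous_on_compose2[OF continuous_on_product_coordinates continuous_on_snd] continuous_on_id)
qed

definition phi :: "cfg \<times> cfg \<Rightarrow> real" where "phi = tern \<circ> enc"

lemma cont_phi: "continuous_on UNIV phi"
  unfolding phi_def by (rule continuous_on_compose[OF cont_enc]) (rule continuous_on_subset[OF cont_tern], simp)

lemma inj_phi: "inj phi"
  unfolding phi_def using inj_tern inj_enc by (simp add: inj_compose)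


lemma meas_cont: "sets M = sets borel \<Longrightarrow> continuous_on UNIV f \<Longrightarrow> f \<in> borel_measurable M"
  using borel_measurable_continuous_onI measurable_cong_sets by blast

lemma bdd_cont:
  assumes "compact (UNIV::'a::topological_space set)" "continuous_on UNIV (f::'a \<Rightarrow> real)"
  shows "\<exists>B. \<forall>x. \<bar>f x\<bar> \<le> B"
proof -
  have "compact (range f)" by (rule compact_continuous_image[OF assms(2,1)])
  then have "bounded (range f)" by (rule compact_imp_bounded)
  then show ?thesis by (auto simp: bounded_real)
qed

lemma integrable_cont:
  assumes "finite_measure M" "sets M = sets borel" "compact (UNIV::'a::topological_space set)"
    "continuous_on UNIV (f::'a \<Rightarrow> real)"
  shows "integrable M f"
proof -
  obtain B where B: "\<And>x. \<bar>f x\<bar> \<le> B" using bdd_cont[OF assms(3,4)] by blast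
  show ?thesis
    by (rule finite_measure.integrable_const_bound[OF assms(1), of f B])
      (use B meas_cont[OF assms(2,4)] in auto)
qed

lemma cozero:
  fixes g :: "'a::topological_space \<Rightarrow> 'b::metric_space"
  assumes "compact (UNIV::'a set)" "continuous_on UNIV g" "inj g" "open (U::'a set)"
  shows "\<exists>h::_ \<Rightarrow> real. continuous_on UNIV h \<and> (\<forall>x. 0 \<le> h x) \<and> U = {x. 0 < h x}"
proof (cases "U = UNIV")
  case True
  have "continuous_on UNIV (\<lambda>_::'a. 1::real) \<and> (\<forall>x::'a. 0 \<le> (1::real)) \<and> U = {x::'a. 0 < (1::real)}"
    using True by auto
  then show ?thesis by blast
next
  case False
  define C where "C = g ` (-U)"
  have "compact (UNIV \<inter> -U)" using assms(1,4) by (intro compact_Int_closed) auto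
  then have cC: "compact C" unfolding C_def
    by (intro compact_continuous_image continuous_on_subset[OF assms(2)]) auto
  have ne: "C \<noteq> {}" using False by (auto simp: C_def)
  have clC: "closure C = C" using cC by (simp add: compact_imp_closed)
  show ?thesis
  proof (intro exI[of _ "\<lambda>x. infdist (g x) C"] conjI allI)
    show "continuous_on UNIV (\<lambda>x. infdist (g x) C)"
      by (intro continuous_on_infdist assms(2))
    show "0 \<le> infdist (g x) C" for x by (rule infdist_nonneg)
    show "U = {x. 0 < infdist (g x) C}"
    proof -
      have eq: "infdist (g x) C = 0 \<longleftrightarrow> x \<notin> U" for x
        using in_closure_iff_infdist_zero[OF ne, of "g x"] clC inj_image_mem_iff[OF assms(3)]
        by (auto simp: C_def)
      show ?thesis
      proof (rule set_eqI)
        fix x show "x \<in> U \<longleftrightarrow> x \<in> {x. 0 < infdist (g x) C}"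
          using eq[of x] infdist_nonneg[of "g x" C] by auto
      qed
    qed
  qed
qed

lemma lim_indicator_cozero:
  fixes h :: "'a::topological_space \<Rightarrow> real"
  assumes "finite_measure M" "sets M = sets borel" "continuous_on UNIV h" "\<And>x. 0 \<le> h x"
  shows "(\<lambda>n. integral\<^sup>L M (\<lambda>x. min 1 (real n * h x))) \<longlonglongrightarrow> measure M {x. 0 < h x}"
proof -
  have opn: "open {x. 0 < h x}"
    using open_vimage[of "{0<..}" h] assms(3) by (auto simp: vimage_def)
  then have mU: "{x. 0 < h x} \<in> sets M" using assms(2) by auto
  have "(\<lambda>n. integral\<^sup>L M (\<lambda>x. min 1 (real n * h x))) \<longlonglongrightarrow> integral\<^sup>L M (indicator {x. 0 < h x})"
  proof (rule integral_dominated_convergence[where w="\<lambda>_. 1"])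
    show "indicator {x. 0 < h x} \<in> borel_measurable M" using mU by auto
    show "(\<lambda>x. min 1 (real n * h x)) \<in> borel_measurable M" for n
      by (rule meas_cont[OF assms(2)]) (auto intro!: continuous_intros assms(3))
    show "integrable M (\<lambda>_. 1::real)" using assms(1) by (simp add: finite_measure.integrable_const)
    show "AE x in M. norm (min 1 (real n * h x)) \<le> 1" for n using assms(4) by auto
    show "AE x in M. (\<lambda>n. min 1 (real n * h x)) \<longlonglongrightarrow> indicator {x. 0 < h x} x"
    proof (rule AE_I2)
      fix x show "(\<lambda>n. min 1 (real n * h x)) \<longlonglongrightarrow> indicator {x. 0 < h x} x"
      proof (cases "0 < h x")
        case True
        obtain n0 :: nat where "1 / h x < real n0" using reals_Archimedean2 by blast
        then have n0: "1 < real n0 * h x" using True by (simp add: divide_less_eq)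
        have "real n0 * h x \<le> real n * h x" if "n \<ge> n0" for n
          using True that by (intro mult_right_mono) auto
        then have "\<forall>n\<ge>n0. min 1 (real n * h x) = 1"
          using n0 by (metis less_le_not_le min_absorb1 order.trans)
        then have ev: "eventually (\<lambda>n. min 1 (real n * h x) = 1) sequentially"
          by (auto simp: eventually_sequentially)
        show ?thesis using True tendsto_eventually[OF ev] by simp
      next
        case False then have "h x = 0" using assms(4)[of x] by auto
        then show ?thesis by simp
      qed
    qed
  qed
  also have "integral\<^sup>L M (indicator {x. 0 < h x}) = measure M {x. 0 < h x}"
    using mU finite_measure.emeasure_finite[OF assms(1)] by (simp)
  finally show ?thesis .
qed

lemma meas_eq_cont:
  fixes M1 M2 :: "'a::topological_space measure"
  assumes cz: "\<And>U. open U \<Longrightarrow> \<exists>h::_ \<Rightarrow> real. continuous_on UNIV h \<and> (\<forall>x. 0 \<le> h x) \<and> U = {x::'a. 0 < h x}"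
    and fm: "finite_measure M1" "finite_measure M2"
    and s: "sets M1 = sets borel" "sets M2 = sets borel"
    and eq: "\<And>f. continuous_on UNIV (f::'a \<Rightarrow> real) \<Longrightarrow> integral\<^sup>L M1 f = integral\<^sup>L M2 f"
  shows "M1 = M2"
proof (rule measure_eqI_generator_eq[where E="{S. open S}" and \<Omega>=UNIV and A="\<lambda>_. UNIV"])
  show "Int_stable {S. open S}" by (auto simp: Int_stable_def)
  show "sets M1 = sigma_sets UNIV {S. open S}" "sets M2 = sigma_sets UNIV {S. open S}"
    using s by (auto simp: sets_borel)
  show "emeasure M1 UNIV \<noteq> \<infinity>" using finite_measure.emeasure_finite[OF fm(1)] by auto
  fix U :: "'a set" assume "U \<in> {S. open S}"
  then have "open U" by simp
  from cz[OF this] obtain h :: "'a \<Rightarrow> real" where h: "continuous_on UNIV h" "\<And>x. 0 \<le> h x" "U = {x. 0 < h x}"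
    by blast
  have ints: "integral\<^sup>L M2 (\<lambda>x. min 1 (real n * h x)) = integral\<^sup>L M1 (\<lambda>x. min 1 (real n * h x))" for n
    by (rule eq[symmetric]) (intro continuous_intros h(1))
  have l2: "(\<lambda>n. integral\<^sup>L M1 (\<lambda>x. min 1 (real n * h x))) \<longlonglongrightarrow> measure M2 {x. 0 < h x}"
    using lim_indicator_cozero[OF fm(2) s(2) h(1,2)] by (simp only: ints)
  have "measure M1 {x. 0 < h x} = measure M2 {x. 0 < h x}"
    by (rule LIMSEQ_unique[OF lim_indicator_cozero[OF fm(1) s(1) h(1,2)] l2])
  then have "measure M1 U = measure M2 U" using h(3) by simp
  then show "emeasure M1 U = emeasure M2 U"
    using finite_measure.emeasure_eq_measure[OF fm(1)] finite_measure.emeasure_eq_measure[OF fm(2)] by simp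
qed auto

lemma cz_cfg2: "open U \<Longrightarrow> \<exists>h::_ \<Rightarrow> real. continuous_on UNIV h \<and> (\<forall>x. 0 \<le> h x) \<and> U = {x::cfg\<times>cfg. 0 < h x}"
  by (rule cozero[OF compact_cfg2 cont_phi inj_phi])

lemma cz_cfg: "open U \<Longrightarrow> \<exists>h::_ \<Rightarrow> real. continuous_on UNIV h \<and> (\<forall>x. 0 \<le> h x) \<and> U = {x::cfg. 0 < h x}"
proof (rule cozero[OF compact_cfg, of "\<lambda>z. phi (z, z)"])
  show "continuous_on UNIV (\<lambda>z. phi (z, z))"
    by (rule continuous_on_compose2[OF cont_phi]) (auto intro!: continuous_on_Pair continuous_on_id)
  show "inj (\<lambda>z. phi (z, z))" using inj_phi by (auto simp: inj_def)
qed


lemma shift_by_add: "shift_by a (shift_by b y) = shift_by (a + b) y"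
  by (simp add: shift_by_def ac_simps)

lemma shift_by_0[simp]: "shift_by 0 y = y" by (simp add: shift_by_def)

lemma shift_eq: "shift = shift_by 1" by (simp add: fun_eq_iff shift_def shift_by_def)

lemma subshiftI:
  assumes "closed X" "\<And>y. y \<in> X \<Longrightarrow> shift y \<in> X" "\<And>y. y \<in> X \<Longrightarrow> shift_by (-1) y \<in> X"
  shows "subshift X"
  unfolding subshift_def
proof (intro conjI)
  show "X \<subseteq> shift ` X"
  proof
    fix y assume "y \<in> X"
    then have "shift_by (-1) y \<in> X" by (rule assms(3))
    moreover have "y = shift (shift_by (-1) y)" by (simp add: shift_eq shift_by_add)
    ultimately show "y \<in> shift ` X" by blast
  qed
qed (use assms in auto)

definition Sx :: "cfg \<Rightarrow> cfg set" where "Sx x = {shift_by n y | n y. y \<le> x}"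

lemma ioc_Sx: "interval_orbit_closure x = closure (Sx x)"
  by (simp add: interval_orbit_closure_def Sx_def)

lemma Sx_shift_by: "y \<in> Sx x \<Longrightarrow> shift_by k y \<in> Sx x"
  by (clarsimp simp: Sx_def shift_by_add) blast

lemma ioc_shift_by: "y \<in> interval_orbit_closure x \<Longrightarrow> shift_by k y \<in> interval_orbit_closure x"
proof -
  have "shift_by k ` closure (Sx x) \<subseteq> closure (Sx x)"
    by (rule image_closure_subset) (auto intro: continuous_on_subset[OF cont_shift_by] Sx_shift_by closure_subset[THEN subsetD])
  then show "y \<in> interval_orbit_closure x \<Longrightarrow> shift_by k y \<in> interval_orbit_closure x"
    by (auto simp: ioc_Sx)
qed

lemma closed_ioc: "closed (interval_orbit_closure x)" by (simp add: ioc_Sx)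

lemma subshift_ioc: "subshift (interval_orbit_closure x)"
  by (rule subshiftI) (auto simp: closed_ioc shift_eq ioc_shift_by)

lemma subshift_Inter_ioc: "subshift (\<Inter>K\<in>A. interval_orbit_closure (xs K))"
  by (rule subshiftI) (auto simp: closed_ioc shift_eq ioc_shift_by intro!: closed_INT)

lemma cont_and_with: "continuous_on UNIV (\<lambda>a::cfg. \<lambda>m. a m \<and> y m)"
proof (intro continuous_on_coordinatewise_then_product)
  fix m show "continuous_on UNIV (\<lambda>a::cfg. a m \<and> y m)"
    by (cases "y m") simp_all
qed

lemma ioc_down:
  assumes "z \<in> interval_orbit_closure x" "y \<le> z"
  shows "y \<in> interval_orbit_closure x"
proof -
  let ?r = "\<lambda>a::cfg. \<lambda>m. a m \<and> y m"
  have "?r ` Sx x \<subseteq> Sx x"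
  proof
    fix b assume "b \<in> ?r ` Sx x"
    then obtain n y' where b: "b = ?r (shift_by n y')" "y' \<le> x" by (auto simp: Sx_def)
    have "b = shift_by n (shift_by (-n) b)" by (simp add: shift_by_add)
    moreover have "shift_by (-n) b \<le> x"
      using b by (auto simp: le_fun_def shift_by_def)
    ultimately show "b \<in> Sx x" unfolding Sx_def by blast
  qed
  then have A: "?r ` closure (Sx x) \<subseteq> closure (Sx x)"
    by (intro image_closure_subset) (auto intro: continuous_on_subset[OF cont_and_with] closure_subset[THEN subsetD])
  have B: "?r z = y" using assms(2) by (auto simp: le_fun_def)
  have "?r z \<in> closure (Sx x)" using A assms(1) unfolding ioc_Sx by blast
  then show ?thesis using B by (simp add: ioc_Sx)
qed

lemma orbit_sub_ioc: "closure (range (\<lambda>n. shift_by n x)) \<subseteq> interval_orbit_closure x"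
  unfolding ioc_Sx by (rule closure_mono) (auto simp: Sx_def)

lemma ioc_mono: "x \<le> x' \<Longrightarrow> interval_orbit_closure x \<subseteq> interval_orbit_closure x'"
  unfolding ioc_Sx by (rule closure_mono) (auto simp: Sx_def intro: order_trans)

lemma coord_mult_le: "coord_mult p \<le> fst p" by (auto simp: coord_mult_def le_fun_def)

lemma qg_prob: "quasi_generic y \<mu> N \<Longrightarrow> prob_space \<mu>" by (simp add: quasi_generic_def)
lemma qg_sets: "quasi_generic y \<mu> N \<Longrightarrow> sets \<mu> = sets borel" by (simp add: quasi_generic_def)
lemma qg_lim: "quasi_generic y \<mu> N \<Longrightarrow> continuous_on UNIV f \<Longrightarrow>
   (\<lambda>i. (1 / real (N i)) * (\<Sum>n\<in>{1..N i}. f (shift_by (int n) y))) \<longlonglongrightarrow> integral\<^sup>L \<mu> f"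
  by (simp add: quasi_generic_def)

lemma real_N_inf: "strict_mono N \<Longrightarrow> filterlim (\<lambda>i. real (N i)) at_top sequentially"
  using filterlim_compose[OF filterlim_real_sequentially filterlim_subseq] by auto

lemma err_to_0:
  assumes "strict_mono N" "\<And>i. \<bar>e i\<bar> \<le> B"
  shows "(\<lambda>i. e i / real (N i)) \<longlonglongrightarrow> 0"
proof (rule Lim_null_comparison[where g="\<lambda>i. B / real (N i)"])
  have "B \<ge> 0" using assms(2)[of 0] by auto
  show "eventually (\<lambda>i. norm (e i / real (N i)) \<le> B / real (N i)) sequentially"
    using assms(2) by (auto intro!: always_eventually divide_right_mono simp: abs_divide)
  show "(\<lambda>i. B / real (N i)) \<longlonglongrightarrow> 0"
    by (rule tendsto_divide_0[OF tendsto_const filterlim_at_top_imp_at_infinity[OF real_N_inf[OF assms(1)]]])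
qed

lemma qg_integral_shift:
  assumes qg: "quasi_generic y \<mu> N" and N: "strict_mono N" and f: "continuous_on UNIV (f::cfg \<Rightarrow> real)"
  shows "integral\<^sup>L \<mu> (\<lambda>z. f (shift z)) = integral\<^sup>L \<mu> f"
proof -
  obtain B where B: "\<And>x. \<bar>f x\<bar> \<le> B" using bdd_cont[OF compact_cfg f] by blast
  define F where "F n = f (shift_by (int n) y)" for n
  have g: "continuous_on UNIV (\<lambda>z. f (shift z))"
    by (rule continuous_on_compose2[OF f cont_shift]) auto
  have eq: "(1 / real (N i)) * (\<Sum>n\<in>{1..N i}. f (shift (shift_by (int n) y)))
      = (1 / real (N i)) * (\<Sum>n\<in>{1..N i}. f (shift_by (int n) y)) + (F (Suc (N i)) - F 1) / real (N i)" for i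
  proof -
    have "(\<Sum>n\<in>{1..N i}. f (shift (shift_by (int n) y))) = (\<Sum>n\<in>{1..N i}. F (Suc n))"
      by (auto simp: F_def shift_eq shift_by_add add.commute intro!: sum.cong)
    also have "\<dots> = (\<Sum>n\<in>{1..N i}. F n) + (\<Sum>n\<in>{1..N i}. F (Suc n) - F n)"
      by (simp add: sum_subtractf)
    also have "(\<Sum>n\<in>{1..N i}. F (Suc n) - F n) = F (Suc (N i)) - F 1"
      by (rule sum_Suc_diff) simp
    finally have e: "(\<Sum>n\<in>{1..N i}. f (shift (shift_by (int n) y))) = (\<Sum>n\<in>{1..N i}. F n) + (F (Suc (N i)) - F 1)" .
    show ?thesis unfolding e by (simp add: F_def distrib_left)
  qed
  have "(\<lambda>i. (1 / real (N i)) * (\<Sum>n\<in>{1..N i}. f (shift (shift_by (int n) y)))) \<longlonglongrightarrow> integral\<^sup>L \<mu> f + 0"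
    unfolding eq
    by (intro tendsto_add qg_lim[OF qg f] err_to_0[OF N]) (use B in \<open>auto simp: F_def intro: order_trans[OF abs_triangle_ineq4] add_mono\<close>)
  moreover have "(\<lambda>i. (1 / real (N i)) * (\<Sum>n\<in>{1..N i}. f (shift (shift_by (int n) y)))) \<longlonglongrightarrow> integral\<^sup>L \<mu> (\<lambda>z. f (shift z))"
    using qg_lim[OF qg g] by simp
  ultimately show ?thesis using LIMSEQ_unique by fastforce
qed

lemma qg_inv:
  assumes qg: "quasi_generic y \<mu> N" and N: "strict_mono N"
  shows "\<mu> \<in> inv_measures UNIV"
proof -
  interpret prob_space \<mu> using qg_prob[OF qg] .
  have s: "sets \<mu> = sets borel" using qg_sets[OF qg] .
  have ms: "shift \<in> measurable \<mu> borel" by (rule meas_cont[OF s cont_shift])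
  have "distr \<mu> borel shift = \<mu>"
  proof (rule meas_eq_cont[OF cz_cfg])
    show "finite_measure (distr \<mu> borel shift)" using prob_space_distr[OF ms] by (auto simp: prob_space_def)
    show "finite_measure \<mu>" by (rule finite_measure_axioms)
    show "sets (distr \<mu> borel shift) = sets borel" by simp
    show "sets \<mu> = sets borel" by (rule s)
    fix f :: "cfg \<Rightarrow> real" assume f: "continuous_on UNIV f"
    have "integral\<^sup>L (distr \<mu> borel shift) f = integral\<^sup>L \<mu> (\<lambda>z. f (shift z))"
      by (rule integral_distr[OF ms]) (rule borel_measurable_continuous_onI[OF f])
    then show "integral\<^sup>L (distr \<mu> borel shift) f = integral\<^sup>L \<mu> f"
      using qg_integral_shift[OF qg N f] by simp
  qed auto
  moreover have "space \<mu> = UNIV" using sets_eq_imp_space_eq[OF s] by simp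
  ultimately show ?thesis using s prob_space_axioms prob_space by (auto simp: inv_measures_def)
qed

lemma qg_support:
  assumes qg: "quasi_generic y \<mu> N"
  shows "measure \<mu> (closure (range (\<lambda>n. shift_by n y))) = 1"
proof -
  interpret prob_space \<mu> using qg_prob[OF qg] .
  have s: "sets \<mu> = sets borel" using qg_sets[OF qg] .
  let ?C = "closure (range (\<lambda>n. shift_by n y))"
  have "open (- ?C)" by auto
  from cz_cfg[OF this] obtain h :: "cfg \<Rightarrow> real" where h: "continuous_on UNIV h" "\<And>x. 0 \<le> h x" "- ?C = {x. 0 < h x}"
    by blast
  have h0: "h (shift_by n y) = 0" for n
  proof -
    have "shift_by n y \<in> ?C" using closure_subset[of "range (\<lambda>n. shift_by n y)"] by blast
    then show ?thesis using h(2,3) by (metis (mono_tags) Compl_iff less_eq_real_def mem_Collect_eq)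
  qed
  have "(\<lambda>i. (1 / real (N i)) * (\<Sum>n\<in>{1..N i}. h (shift_by (int n) y))) \<longlonglongrightarrow> integral\<^sup>L \<mu> h"
    by (rule qg_lim[OF qg h(1)])
  then have "integral\<^sup>L \<mu> h = 0" using h0 by (simp add: LIMSEQ_const_iff)
  then have "AE x in \<mu>. h x = 0"
    using integral_nonneg_eq_0_iff_AE[of \<mu> h] integrable_cont[OF finite_measure_axioms s compact_cfg h(1)] h(2) by auto
  moreover have imp: "h x = 0 \<Longrightarrow> x \<in> ?C" for x
    using h(3) by (metis ComplI less_irrefl mem_Collect_eq)
  ultimately have "AE x in \<mu>. x \<in> ?C" by (rule eventually_mono)
  then show ?thesis using AE_in_set_eq_1[of ?C] s by auto
qed


definition cyl :: "cfg \<Rightarrow> int set \<Rightarrow> cfg set" where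
  "cyl a F = {b. \<forall>i\<in>F. b i = a i}"

lemma open_cyl: "finite F \<Longrightarrow> open (cyl a F)"
proof -
  assume "finite F"
  have "open {b::cfg. \<forall>i\<in>F. b (id i) \<in> {a i}}"
    by (rule product_topology_basis') (use \<open>finite F\<close> open_finite_t1 in auto)
  then show ?thesis by (simp add: cyl_def)
qed

lemma cyl_in_open:
  assumes "open U" "a \<in> U"
  shows "\<exists>F. finite F \<and> cyl a F \<subseteq> U"
proof -
  have "openin (product_topology (\<lambda>i. euclidean) UNIV) U"
    using assms unfolding open_fun_def by auto
  from product_topology_open_contains_basis[OF this assms(2)]
  obtain X where H: "a \<in> (\<Pi>\<^sub>E i\<in>UNIV. X i)" "finite {i. X i \<noteq> UNIV}" "(\<Pi>\<^sub>E i\<in>UNIV. X i) \<subseteq> U"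
    by auto
  have "cyl a {i. X i \<noteq> UNIV} \<subseteq> (\<Pi>\<^sub>E i\<in>UNIV. X i)"
  proof
    fix b assume b: "b \<in> cyl a {i. X i \<noteq> UNIV}"
    have "b i \<in> X i" for i
    proof (cases "X i = UNIV")
      case False then have "b i = a i" using b by (auto simp: cyl_def)
      then show ?thesis using H(1) by (auto simp: PiE_UNIV_domain)
    qed auto
    then show "b \<in> (\<Pi>\<^sub>E i\<in>UNIV. X i)" by (auto simp: PiE_UNIV_domain)
  qed
  then show ?thesis using H(2,3) by blast
qed

lemma window_cont:
  assumes f: "continuous_on UNIV (f::cfg \<Rightarrow> real)" and e: "e > 0"
  shows "\<exists>W::nat. \<forall>a b. (\<forall>m. \<bar>m\<bar> \<le> int W \<longrightarrow> a m = b m) \<longrightarrow> \<bar>f a - f b\<bar> < e"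
proof -
  have "\<exists>F. finite F \<and> cyl a F \<subseteq> f -` {f a - e/2 <..< f a + e/2}" for a
  proof (rule cyl_in_open)
    show "open (f -` {f a - e / 2<..<f a + e / 2})"
      using open_vimage[OF _ f] by auto
  qed (use e in auto)
  then obtain F where F: "\<And>a. finite (F a)" "\<And>a. cyl a (F a) \<subseteq> f -` {f a - e/2 <..< f a + e/2}"
    by metis
  have "a \<in> cyl a (F a)" for a by (simp add: cyl_def)
  then have cov: "UNIV \<subseteq> (\<Union>a\<in>UNIV. cyl a (F a))" by blast
  obtain C where C: "finite C" "UNIV \<subseteq> (\<Union>a\<in>C. cyl a (F a))"
    using compactE_image[OF compact_cfg _ cov] open_cyl F(1) by metis
  define W where "W = Max (insert 0 ((\<lambda>m. nat \<bar>m\<bar>) ` (\<Union>a\<in>C. F a)))"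
  have fin: "finite (\<Union>a\<in>C. F a)" using C(1) F(1) by auto
  have Wb: "\<bar>m\<bar> \<le> int W" if "c \<in> C" "m \<in> F c" for c m
  proof -
    have "nat \<bar>m\<bar> \<le> W" unfolding W_def using fin that by (intro Max_ge) auto
    then show ?thesis by linarith
  qed
  show ?thesis
  proof (intro exI allI impI)
    fix a b :: cfg assume ab: "\<forall>m. \<bar>m\<bar> \<le> int W \<longrightarrow> a m = b m"
    obtain c where c: "c \<in> C" "a \<in> cyl c (F c)" using C(2) by blast
    have "b \<in> cyl c (F c)" using c ab Wb by (auto simp: cyl_def)
    then have "f b \<in> {f c - e/2 <..< f c + e/2}" "f a \<in> {f c - e/2 <..< f c + e/2}" using F(2)[of c] c by auto
    then have "f a - f b < e" "f b - f a < e" by auto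
    then show "\<bar>f a - f b\<bar> < e" by (simp add: abs_less_iff)
  qed
qed

definition ind :: "cfg \<Rightarrow> int \<Rightarrow> real" where "ind y m = (if y m then 1 else 0)"

lemma sum_shift_bound:
  fixes D :: "int \<Rightarrow> real"
  assumes D0: "\<And>m. 0 \<le> D m" and D1: "\<And>m. D m \<le> 1" and j: "\<bar>j\<bar> \<le> int W"
  shows "(\<Sum>n\<in>{1..L}. D (int n + j)) \<le> (\<Sum>n\<in>{1..L}. D (int n)) + 2 * real W"
proof -
  have "(\<Sum>n\<in>{1..L}. D (int n + j)) = (\<Sum>m\<in>(\<lambda>n. int n + j) ` {1..L}. D m)"
    by (subst sum.reindex) (auto simp: inj_on_def)
  also have "\<dots> \<le> (\<Sum>m\<in>{1 - int W..int L + int W}. D m)"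
    by (rule sum_mono2) (use j D0 in auto)
  also have "{1 - int W..int L + int W} = {1 - int W..0} \<union> ({1..int L} \<union> {int L + 1..int L + int W})"
    by auto
  also have "(\<Sum>m\<in>{1 - int W..0} \<union> ({1..int L} \<union> {int L + 1..int L + int W}). D m)
      = (\<Sum>m\<in>{1 - int W..0}. D m) + ((\<Sum>m\<in>{1..int L}. D m) + (\<Sum>m\<in>{int L + 1..int L + int W}. D m))"
    by (subst sum.union_disjoint, auto)+
  also have "(\<Sum>m\<in>{1 - int W..0}. D m) \<le> real W"
    using sum_bounded_above[of "{1 - int W..0}" D 1] D1 by auto
  also have "(\<Sum>m\<in>{int L + 1..int L + int W}. D m) \<le> real W"
    using sum_bounded_above[of "{int L + 1..int L + int W}" D 1] D1 by auto
  also have "(\<Sum>m\<in>{1..int L}. D m) = (\<Sum>n\<in>{1..L}. D (int n))"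
  proof -
    have "{1..int L} = int ` {1..L}" by (simp add: image_int_atLeastAtMost)
    then show ?thesis by (simp add: sum.reindex)
  qed
  finally show ?thesis by simp
qed

lemma pt_bound:
  assumes W: "\<forall>a b. (\<forall>m. \<bar>m\<bar> \<le> int W \<longrightarrow> a m = b m) \<longrightarrow> \<bar>f a - f b\<bar> < e"
    and B: "\<And>z. \<bar>f z\<bar> \<le> B" and le: "x \<le> xK" and e_pos: "0 \<le> e"
  shows "\<bar>f (shift_by n xK) - f (shift_by n x)\<bar> \<le> e + 2 * B * (\<Sum>j\<in>{- int W..int W}. ind xK (n + j) - ind x (n + j))"
proof -
  have nn: "0 \<le> ind xK m - ind x m" for m using le by (auto simp: ind_def le_fun_def)
  have sn: "0 \<le> (\<Sum>j\<in>{- int W..int W}. ind xK (n + j) - ind x (n + j))"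
    by (rule sum_nonneg) (rule nn)
  have B0: "0 \<le> B" using B[of undefined] by linarith
  show ?thesis
  proof (cases "\<forall>j. \<bar>j\<bar> \<le> int W \<longrightarrow> xK (n + j) = x (n + j)")
    case True
    then have "\<bar>f (shift_by n xK) - f (shift_by n x)\<bar> < e"
      using W by (auto simp: shift_by_def add.commute)
    moreover have "0 \<le> 2 * B * (\<Sum>j\<in>{- int W..int W}. ind xK (n + j) - ind x (n + j))"
      using B0 sn by simp
    ultimately show ?thesis by linarith
  next
    case False
    then obtain j0 where j0: "\<bar>j0\<bar> \<le> int W" "xK (n + j0) \<noteq> x (n + j0)" by auto
    then have "ind xK (n + j0) - ind x (n + j0) = 1" using le by (auto simp: ind_def le_fun_def)
    moreover have "ind xK (n + j0) - ind x (n + j0) \<le> (\<Sum>j\<in>{- int W..int W}. ind xK (n + j) - ind x (n + j))"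
      by (rule member_le_sum) (use j0 nn in auto)
    ultimately have s1: "1 \<le> (\<Sum>j\<in>{- int W..int W}. ind xK (n + j) - ind x (n + j))" by simp
    have "\<bar>f (shift_by n xK) - f (shift_by n x)\<bar> \<le> 2 * B"
      using B[of "shift_by n xK"] B[of "shift_by n x"] by linarith
    also have "\<dots> \<le> 2 * B * (\<Sum>j\<in>{- int W..int W}. ind xK (n + j) - ind x (n + j))"
      using s1 B0 by (simp add: mult_le_cancel_left1)
    finally show ?thesis using e_pos by linarith
  qed
qed

lemma avg_bound:
  fixes L W :: nat
  assumes W: "\<forall>a b. (\<forall>m. \<bar>m\<bar> \<le> int W \<longrightarrow> a m = b m) \<longrightarrow> \<bar>f a - f b\<bar> < e"
    and B: "\<And>z. \<bar>f z\<bar> \<le> B" and le: "x \<le> xK" and e_pos: "0 \<le> e"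
  shows "\<bar>(1 / real L) * (\<Sum>n\<in>{1..L}. f (shift_by (int n) xK)) - (1 / real L) * (\<Sum>n\<in>{1..L}. f (shift_by (int n) x))\<bar>
    \<le> e + 2 * B * (2 * real W + 1) * ((1 / real L) * (\<Sum>n\<in>{1..L}. ind xK (int n) - ind x (int n)) + 2 * real W / real L)"
proof (cases "L = 0")
  case True then show ?thesis using e_pos by simp
next
  case False
  define Dd where "Dd m = ind xK m - ind x m" for m
  have D0: "0 \<le> Dd m" for m using le by (auto simp: Dd_def ind_def le_fun_def)
  have D1: "Dd m \<le> 1" for m by (auto simp: Dd_def ind_def)
  have B0: "0 \<le> B" using B[of undefined] by linarith
  define Dsum where "Dsum = (\<Sum>n\<in>{1..L}. Dd (int n))"
  have "\<bar>(\<Sum>n\<in>{1..L}. f (shift_by (int n) xK)) - (\<Sum>n\<in>{1..L}. f (shift_by (int n) x))\<bar>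
      = \<bar>\<Sum>n\<in>{1..L}. f (shift_by (int n) xK) - f (shift_by (int n) x)\<bar>"
    by (simp add: sum_subtractf)
  also have "\<dots> \<le> (\<Sum>n\<in>{1..L}. \<bar>f (shift_by (int n) xK) - f (shift_by (int n) x)\<bar>)"
    by (rule sum_abs)
  also have "\<dots> \<le> (\<Sum>n\<in>{1..L}. e + 2 * B * (\<Sum>j\<in>{- int W..int W}. Dd (int n + j)))"
    by (rule sum_mono) (use pt_bound[OF W B le e_pos] in \<open>simp add: Dd_def\<close>)
  also have "\<dots> = real L * e + 2 * B * (\<Sum>j\<in>{- int W..int W}. \<Sum>n\<in>{1..L}. Dd (int n + j))"
    by (simp add: sum.distrib sum_distrib_left sum.swap[of _ "{- int W..int W}"])
  also have "(\<Sum>j\<in>{- int W..int W}. \<Sum>n\<in>{1..L}. Dd (int n + j)) \<le> (\<Sum>j\<in>{- int W..int W}. Dsum + 2 * real W)"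
    unfolding Dsum_def by (rule sum_mono) (rule sum_shift_bound[OF D0 D1], simp add: abs_le_iff)
  also have "(\<Sum>j\<in>{- int W..int W}. Dsum + 2 * real W) = (2 * real W + 1) * (Dsum + 2 * real W)"
  proof -
    have "card {- int W..int W} = 2 * W + 1" by simp
    then show ?thesis by simp
  qed
  finally have main: "\<bar>(\<Sum>n\<in>{1..L}. f (shift_by (int n) xK)) - (\<Sum>n\<in>{1..L}. f (shift_by (int n) x))\<bar>
     \<le> real L * e + 2 * B * ((2 * real W + 1) * (Dsum + 2 * real W))"
    using B0 by (simp add: mult_left_mono)
  have Lpos: "real L > 0" using False by simp
  have "\<bar>(1 / real L) * (\<Sum>n\<in>{1..L}. f (shift_by (int n) xK)) - (1 / real L) * (\<Sum>n\<in>{1..L}. f (shift_by (int n) x))\<bar>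
      = \<bar>(\<Sum>n\<in>{1..L}. f (shift_by (int n) xK)) - (\<Sum>n\<in>{1..L}. f (shift_by (int n) x))\<bar> / real L"
    by (simp add: diff_divide_distrib[symmetric] abs_divide)
  also have "\<dots> \<le> (real L * e + 2 * B * ((2 * real W + 1) * (Dsum + 2 * real W))) / real L"
    by (rule divide_right_mono[OF main]) simp
  also have "\<dots> = e + 2 * B * (2 * real W + 1) * ((1 / real L) * Dsum + 2 * real W / real L)"
    using Lpos by (simp add: field_simps)
  finally show ?thesis by (simp add: Dsum_def Dd_def)
qed

lemma cont_ind: "continuous_on UNIV (\<lambda>z::cfg. ind z m)"
  unfolding ind_def
  using continuous_on_compose2[OF cont_from_finite[of UNIV "\<lambda>b::bool. if b then 1 else (0::real)"]
          continuous_on_product_coordinates[of m]] by auto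

lemma ind_shift: "ind (shift_by (int n) y) 0 = ind y (int n)"
  by (simp add: ind_def shift_by_def)

lemma one_freq_integral:
  assumes "sets \<nu> = sets borel" "finite_measure \<nu>"
  shows "integral\<^sup>L \<nu> (\<lambda>z. ind z 0) = one_freq \<nu>"
proof -
  have eq: "(\<lambda>z. ind z 0) = indicator {z::cfg. z 0}" by (auto simp: ind_def indicator_def fun_eq_iff)
  have "{z::cfg. z 0} = cyl (\<lambda>_. True) {0}" by (auto simp: cyl_def)
  then have "open {z::cfg. z 0}" using open_cyl[of "{0}"] by simp
  then have "{z::cfg. z 0} \<in> sets \<nu>" using assms(1) by auto
  then show ?thesis unfolding eq one_freq_def
    using finite_measure.emeasure_finite[OF assms(2)] by simp
qed

lemma weak_est:
  fixes W :: nat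
  assumes qgK: "quasi_generic xK \<nu>K N" and qg0: "quasi_generic x \<nu>0 N" and N: "strict_mono N"
    and le: "x \<le> xK" and f: "continuous_on UNIV f" and B: "\<And>z. \<bar>f z\<bar> \<le> B" and e: "0 \<le> e"
    and W: "\<forall>a b. (\<forall>m. \<bar>m\<bar> \<le> int W \<longrightarrow> a m = b m) \<longrightarrow> \<bar>f a - f b\<bar> < e"
  shows "\<bar>integral\<^sup>L \<nu>K f - integral\<^sup>L \<nu>0 f\<bar> \<le> e + 2 * B * (2 * real W + 1) * (one_freq \<nu>K - one_freq \<nu>0)"
proof (rule LIMSEQ_le)
  show "(\<lambda>i. \<bar>(1 / real (N i)) * (\<Sum>n\<in>{1..N i}. f (shift_by (int n) xK)) - (1 / real (N i)) * (\<Sum>n\<in>{1..N i}. f (shift_by (int n) x))\<bar>)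
     \<longlonglongrightarrow> \<bar>integral\<^sup>L \<nu>K f - integral\<^sup>L \<nu>0 f\<bar>"
    by (intro tendsto_rabs tendsto_diff qg_lim[OF qgK f] qg_lim[OF qg0 f])
  have fmK: "finite_measure \<nu>K" using qg_prob[OF qgK] by (auto simp: prob_space_def)
  have fm0: "finite_measure \<nu>0" using qg_prob[OF qg0] by (auto simp: prob_space_def)
  have dl: "(\<lambda>i. (1 / real (N i)) * (\<Sum>n\<in>{1..N i}. ind xK (int n) - ind x (int n)))
      \<longlonglongrightarrow> one_freq \<nu>K - one_freq \<nu>0"
  proof -
    have "(\<lambda>i. (1 / real (N i)) * (\<Sum>n\<in>{1..N i}. ind (shift_by (int n) xK) 0) - (1 / real (N i)) * (\<Sum>n\<in>{1..N i}. ind (shift_by (int n) x) 0))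
      \<longlonglongrightarrow> integral\<^sup>L \<nu>K (\<lambda>z. ind z 0) - integral\<^sup>L \<nu>0 (\<lambda>z. ind z 0)"
      by (intro tendsto_diff qg_lim[OF qgK cont_ind] qg_lim[OF qg0 cont_ind])
    then show ?thesis
      by (simp add: ind_shift one_freq_integral[OF qg_sets[OF qgK] fmK] one_freq_integral[OF qg_sets[OF qg0] fm0]
          sum_subtractf right_diff_distrib)
  qed
  have "(\<lambda>i. 2 * real W / real (N i)) \<longlonglongrightarrow> 0"
    by (rule err_to_0[OF N]) auto
  show "(\<lambda>i. e + 2 * B * (2 * real W + 1) * ((1 / real (N i)) * (\<Sum>n\<in>{1..N i}. ind xK (int n) - ind x (int n)) + 2 * real W / real (N i)))
     \<longlonglongrightarrow> e + 2 * B * (2 * real W + 1) * (one_freq \<nu>K - one_freq \<nu>0)"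
    using tendsto_add[OF tendsto_const[of e] tendsto_mult[OF tendsto_const[of "2 * B * (2 * real W + 1)"] tendsto_add[OF dl \<open>(\<lambda>i. 2 * real W / real (N i)) \<longlonglongrightarrow> 0\<close>]]]
    by simp
  show "\<exists>n0. \<forall>n\<ge>n0. \<bar>(1 / real (N n)) * (\<Sum>n\<in>{1..N n}. f (shift_by (int n) xK)) - (1 / real (N n)) * (\<Sum>n\<in>{1..N n}. f (shift_by (int n) x))\<bar>
     \<le> e + 2 * B * (2 * real W + 1) * ((1 / real (N n)) * (\<Sum>n\<in>{1..N n}. ind xK (int n) - ind x (int n)) + 2 * real W / real (N n))"
    using avg_bound[OF W B le e] by blast
qed

lemma x_le_xs:
  fixes xs :: "nat \<Rightarrow> cfg" and x :: cfg
  assumes noninc: "\<And>K. K \<ge> 1 \<Longrightarrow> xs (Suc K) \<le> xs K"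
    and lim: "\<And>n. eventually (\<lambda>K. xs K n = x n) sequentially"
    and K: "K \<ge> (1::nat)"
  shows "x \<le> xs K"
proof (rule le_funI)
  fix n
  show "x n \<le> xs K n"
  proof (rule ccontr)
    assume "\<not> x n \<le> xs K n"
    then have xn: "x n" "\<not> xs K n" by auto
    have "\<not> xs (K + d) n" for d
    proof (induction d)
      case 0 then show ?case using xn by simp
    next
      case (Suc d)
      have "xs (Suc (K + d)) \<le> xs (K + d)" using noninc K by simp
      then show ?case using Suc by (auto simp: le_fun_def)
    qed
    moreover obtain K0 where "\<forall>K'\<ge>K0. xs K' n = x n" using lim[of n] by (auto simp: eventually_sequentially)
    ultimately show False using xn by (metis le_add1 le_add2 le_iff_add add.commute)
  qed
qed

lemma weak_conv_main:
  fixes xs :: "nat \<Rightarrow> cfg" and x :: cfg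
    and N :: "nat \<Rightarrow> nat" and \<nu> :: "nat \<Rightarrow> cfg measure" and \<nu>inf :: "cfg measure"
  assumes noninc: "\<And>K. K \<ge> 1 \<Longrightarrow> xs (Suc K) \<le> xs K"
    and lim: "\<And>n. eventually (\<lambda>K. xs K n = x n) sequentially"
    and N_incr: "strict_mono N"
    and qg: "\<And>K. K \<ge> 1 \<Longrightarrow> quasi_generic (xs K) (\<nu> K) N"
    and qg_inf: "quasi_generic x \<nu>inf N"
    and freq: "(\<lambda>K. one_freq (\<nu> K)) \<longlonglongrightarrow> one_freq \<nu>inf"
  shows "weak_conv_seq \<nu> \<nu>inf"
  unfolding weak_conv_seq_def
proof (intro allI impI)
  fix f :: "cfg \<Rightarrow> real" assume f: "continuous_on UNIV f"
  show "(\<lambda>K. integral\<^sup>L (\<nu> K) f) \<longlonglongrightarrow> integral\<^sup>L \<nu>inf f"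
    unfolding LIMSEQ_iff
  proof (intro allI impI)
    fix r :: real assume r: "0 < r"
    obtain B where B: "\<And>z. \<bar>f z\<bar> \<le> B" using bdd_cont[OF compact_cfg f] by blast
    have B0: "0 \<le> B" using B[of undefined] by linarith
    obtain W :: nat where W: "\<forall>a b. (\<forall>m. \<bar>m\<bar> \<le> int W \<longrightarrow> a m = b m) \<longrightarrow> \<bar>f a - f b\<bar> < r/2"
      using window_cont[OF f, of "r/2"] r by auto
    define C where "C = 2 * B * (2 * real W + 1)"
    have C0: "0 \<le> C" using B0 by (simp add: C_def)
    have "(r/2) / (C + 1) > 0" using r C0 by simp
    then obtain K0 where K0: "\<And>K. K \<ge> K0 \<Longrightarrow> norm (one_freq (\<nu> K) - one_freq \<nu>inf) < (r/2) / (C + 1)"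
      using freq unfolding LIMSEQ_iff by blast
    show "\<exists>no. \<forall>K\<ge>no. norm (integral\<^sup>L (\<nu> K) f - integral\<^sup>L \<nu>inf f) < r"
    proof (intro exI[of _ "max K0 1"] allI impI)
      fix K assume K: "max K0 1 \<le> K"
      have K1: "1 \<le> K" using K by simp
      have le: "x \<le> xs K" by (rule x_le_xs[where xs=xs and x=x]) (use noninc lim K1 in auto)
      have est: "\<bar>integral\<^sup>L (\<nu> K) f - integral\<^sup>L \<nu>inf f\<bar> \<le> r/2 + C * (one_freq (\<nu> K) - one_freq \<nu>inf)"
        unfolding C_def
        by (rule weak_est[OF qg[OF K1] qg_inf N_incr le f B _ W]) (use r in auto)
      have "C * (one_freq (\<nu> K) - one_freq \<nu>inf) \<le> C * ((r/2) / (C + 1))"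
        using K0[of K] K C0 by (intro mult_left_mono) auto
      also have "\<dots> < r/2" using C0 r by (simp add: field_simps)
      finally show "norm (integral\<^sup>L (\<nu> K) f - integral\<^sup>L \<nu>inf f) < r" using est by simp
    qed
  qed
qed


lemma tern_bounds: "0 \<le> tern a" "tern a \<le> 3/2"
proof -
  show "0 \<le> tern a" unfolding tern_def by (rule suminf_nonneg[OF summable_tern]) simp
  have "tern a \<le> (\<Sum>n. (1/3::real)^n)"
    unfolding tern_def by (rule suminf_le[OF _ summable_tern summable_geometric]) auto
  also have "\<dots> = 3/2" by (simp add: suminf_geometric)
  finally show "tern a \<le> 3/2" .
qed

lemma phi_bounds: "0 \<le> phi p" "phi p \<le> 3/2"
  using tern_bounds by (auto simp: phi_def)

lemma closed_range_phi: "closed (range phi)"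
  by (rule compact_imp_closed[OF compact_continuous_image[OF cont_phi compact_cfg2]])

lemma meas_phi: "sets P = sets borel \<Longrightarrow> phi \<in> borel_measurable P"
  by (rule meas_cont[OF _ cont_phi])

lemma rd_distr_phi:
  assumes "prob_space P" "sets P = sets borel"
  shows "real_distribution (distr P borel phi)"
  unfolding real_distribution_def real_distribution_axioms_def
  using prob_space.prob_space_distr[OF assms(1) meas_phi[OF assms(2)]] by simp

lemma compactness:
  fixes P :: "nat \<Rightarrow> (cfg \<times> cfg) measure"
  assumes ps: "\<And>k. prob_space (P k)" and ss: "\<And>k. sets (P k) = sets borel"
  shows "\<exists>r Q. strict_mono r \<and> prob_space Q \<and> sets Q = sets borel \<and>
     (\<forall>f::cfg\<times>cfg \<Rightarrow> real. continuous_on UNIV f \<longrightarrow> (\<lambda>k. integral\<^sup>L (P (r k)) f) \<longlonglongrightarrow> integral\<^sup>L Q f)"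
proof -
  define \<rho> where "\<rho> k = distr (P k) borel phi" for k
  have rd: "\<And>k. real_distribution (\<rho> k)" using rd_distr_phi ps ss by (simp add: \<rho>_def)
  have sp: "space (P k) = UNIV" for k using sets_eq_imp_space_eq[OF ss[of k]] by simp
  have tight: "tight \<rho>"
    unfolding tight_def
  proof (intro conjI allI impI)
    show "real_distribution (\<rho> n)" for n by (rule rd)
    fix \<epsilon> :: real assume \<epsilon>: "0 < \<epsilon>"
    have m1: "measure (\<rho> n) {-1<..2} = 1" for n
    proof -
      have "measure (\<rho> n) {-1<..2} = measure (P n) (phi -` {-1<..2} \<inter> space (P n))"
        unfolding \<rho>_def by (rule measure_distr[OF meas_phi[OF ss]]) simp
      also have "phi -` {-1<..2} \<inter> space (P n) = space (P n)"
      proof -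
        have "phi z \<in> {-1<..2}" for z using phi_bounds(1)[of z] phi_bounds(2)[of z] by auto
        then show ?thesis by auto
      qed
      also have "measure (P n) (space (P n)) = 1" using prob_space.prob_space[OF ps] .
      finally show ?thesis .
    qed
    show "\<exists>a b. a < b \<and> (\<forall>n. 1 - \<epsilon> < measure (\<rho> n) {a<..b})"
      by (rule exI[of _ "-1"], rule exI[of _ 2]) (use m1 \<epsilon> in auto)
  qed
  have smid: "strict_mono (id::nat \<Rightarrow> nat)" by (simp add: strict_mono_def)
  obtain r Mlim where r: "strict_mono r" "real_distribution Mlim" "weak_conv_m (\<rho> \<circ> id \<circ> r) Mlim"
    using tight_imp_convergent_subsubsequence[OF tight smid] by blast
  have conv: "(\<lambda>k. integral\<^sup>L (\<rho> (r k)) g) \<longlonglongrightarrow> integral\<^sup>L Mlim g"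
    if "\<And>t. isCont g t" "\<And>t. norm (g t) \<le> B" for g :: "real \<Rightarrow> real" and B
    using weak_conv_imp_integral_bdd_continuous_conv[of "\<rho> \<circ> id \<circ> r" Mlim g B] rd r(2,3) that by auto
  interpret Ml: real_distribution Mlim by (rule r(2))
  define T where "T = range phi"
  have Tne: "T \<noteq> {}" by (simp add: T_def)
  have clT: "closed T" using closed_range_phi by (simp add: T_def)
  have AET: "AE t in Mlim. t \<in> T"
  proof -
    define h where "h t = min 1 (infdist t T)" for t
    have hcon: "continuous_on UNIV h" unfolding h_def
      by (intro continuous_on_min continuous_on_const continuous_on_infdist continuous_on_id)
    have hc: "isCont h t" for t using hcon by (simp add: continuous_on_eq_continuous_at)
    have hb: "norm (h t) \<le> 1" for t by (auto simp: h_def infdist_nonneg)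
    have h0: "integral\<^sup>L (\<rho> k) h = 0" for k
    proof -
      have "integral\<^sup>L (\<rho> k) h = integral\<^sup>L (P k) (\<lambda>z. h (phi z))"
        unfolding \<rho>_def by (rule integral_distr[OF meas_phi[OF ss]]) (rule borel_measurable_continuous_onI[OF hcon])
      also have "(\<lambda>z. h (phi z)) = (\<lambda>z. 0)" by (auto simp: h_def T_def infdist_zero)
      finally show ?thesis by simp
    qed
    have "(\<lambda>k. integral\<^sup>L (\<rho> (r k)) h) \<longlonglongrightarrow> integral\<^sup>L Mlim h" by (rule conv[OF hc hb])
    then have "integral\<^sup>L Mlim h = 0" using h0 by (simp add: LIMSEQ_const_iff)
    moreover have "integrable Mlim h"
      by (rule Ml.integrable_const_bound[of h 1]) (use hb borel_measurable_continuous_onI[OF hcon] in auto)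
    ultimately have "AE t in Mlim. h t = 0"
      using integral_nonneg_eq_0_iff_AE[of Mlim h] by (auto simp: h_def infdist_nonneg)
    moreover have "t \<in> T" if "h t = 0" for t
    proof -
      have "infdist t T = 0" using that by (auto simp: h_def min_def split: if_splits)
      then show ?thesis using in_closure_iff_infdist_zero[OF Tne] closure_closed[OF clT] by auto
    qed
    ultimately show ?thesis by (rule eventually_mono)
  qed
  have invc: "continuous_on T (inv phi)" unfolding T_def
    by (rule continuous_on_inv[OF cont_phi compact_cfg2]) (simp add: inv_f_f[OF inj_phi])
  define \<psi> where "\<psi> t = (if t \<in> T then inv phi t else (undefined :: cfg \<times> cfg))" for t
  have \<psi>m: "\<psi> \<in> borel_measurable borel"
    unfolding \<psi>_def using clT invc
    by (intro borel_measurable_continuous_on_if) (auto intro: continuous_on_const)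
  have \<psi>M: "\<psi> \<in> borel_measurable Mlim"
    by (subst measurable_cong_sets[OF Ml.events_eq_borel refl]) (rule \<psi>m)
  define Q where "Q = distr Mlim borel \<psi>"
  show ?thesis
  proof (intro exI[of _ r] exI[of _ Q] conjI allI impI)
    show "strict_mono r" by (rule r(1))
    show "prob_space Q" unfolding Q_def by (rule Ml.prob_space_distr[OF \<psi>M])
    show "sets Q = sets borel" by (simp add: Q_def)
    fix f :: "cfg \<times> cfg \<Rightarrow> real" assume f: "continuous_on UNIV f"
    obtain B where B: "\<And>z. \<bar>f z\<bar> \<le> B" using bdd_cont[OF compact_cfg2 f] by blast
    have B0: "0 \<le> B" using B[of undefined] by linarith
    have c1: "continuous_on T (f \<circ> inv phi)"
      by (rule continuous_on_compose[OF invc continuous_on_subset[OF f]]) simp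
    have "closedin (top_of_set UNIV) T" using clT by simp
    then obtain g where g: "continuous_on UNIV g" "\<And>t. t \<in> T \<Longrightarrow> g t = (f \<circ> inv phi) t" "\<And>t. norm (g t) \<le> B"
      using Tietze[OF c1 _ B0, of UNIV] B by auto
    have gc: "isCont g t" for t using g(1) by (simp add: continuous_on_eq_continuous_at)
    have e1: "integral\<^sup>L (P k) f = integral\<^sup>L (\<rho> k) g" for k
    proof -
      have "integral\<^sup>L (\<rho> k) g = integral\<^sup>L (P k) (\<lambda>z. g (phi z))"
        unfolding \<rho>_def by (rule integral_distr[OF meas_phi[OF ss]]) (rule borel_measurable_continuous_onI[OF g(1)])
      also have "(\<lambda>z. g (phi z)) = f" using g(2) by (auto simp: T_def inv_f_f[OF inj_phi])
      finally show ?thesis by simp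
    qed
    have l1: "(\<lambda>k. integral\<^sup>L (P (r k)) f) \<longlonglongrightarrow> integral\<^sup>L Mlim g"
      unfolding e1 by (rule conv[OF gc g(3)])
    have "integral\<^sup>L Mlim g = integral\<^sup>L Mlim (\<lambda>t. f (\<psi> t))"
    proof (rule integral_cong_AE)
      show "g \<in> borel_measurable Mlim"
        by (subst measurable_cong_sets[OF Ml.events_eq_borel refl]) (rule borel_measurable_continuous_onI[OF g(1)])
      show "(\<lambda>t. f (\<psi> t)) \<in> borel_measurable Mlim"
        using measurable_comp[OF \<psi>M borel_measurable_continuous_onI[OF f]] by (simp add: comp_def)
      show "AE t in Mlim. g t = f (\<psi> t)"
        using AET by (rule eventually_mono) (simp add: g(2) \<psi>_def)
    qed
    also have "\<dots> = integral\<^sup>L Q f"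
      unfolding Q_def by (rule integral_distr[OF \<psi>M, symmetric]) (rule borel_measurable_continuous_onI[OF f])
    finally show "(\<lambda>k. integral\<^sup>L (P (r k)) f) \<longlonglongrightarrow> integral\<^sup>L Q f" using l1 by simp
  qed
qed


lemma inv_mono:
  assumes "X \<subseteq> Y" "closed Y"
  shows "inv_measures X \<subseteq> inv_measures Y"
proof
  fix \<mu> assume "\<mu> \<in> inv_measures X"
  then have m: "sets \<mu> = sets borel" "prob_space \<mu>" "distr \<mu> borel shift = \<mu>" "X \<in> sets \<mu>" "measure \<mu> X = 1"
    by (auto simp: inv_measures_def)
  interpret prob_space \<mu> by (rule m(2))
  have Y: "Y \<in> sets \<mu>" using m(1) assms(2) by auto
  have "measure \<mu> X \<le> measure \<mu> Y" by (rule finite_measure_mono[OF assms(1) Y])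
  then have "measure \<mu> Y = 1" using m(5) prob_le_1[of Y] by linarith
  then show "\<mu> \<in> inv_measures Y" using m Y by (auto simp: inv_measures_def)
qed

lemma dir1:
  assumes qg_inf: "quasi_generic x \<nu>inf N"
  shows "subordinate_measures \<nu>inf \<subseteq> inv_measures (interval_orbit_closure x)"
proof
  fix \<mu> assume "\<mu> \<in> subordinate_measures \<nu>inf"
  then obtain L :: "(cfg \<times> cfg) measure" where L: "\<mu> = distr L borel coord_mult" "sets L = sets borel" "prob_space L"
    "distr L borel (map_prod shift shift) = L" "distr L borel fst = \<nu>inf"
    by (auto simp: subordinate_measures_def)
  interpret L: prob_space L by (rule L(3))
  have spL: "space L = UNIV" using sets_eq_imp_space_eq[OF L(2)] by simp
  have mcm: "coord_mult \<in> borel_measurable L" by (rule meas_cont[OF L(2) cont_coord_mult])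
  have mmp: "map_prod shift shift \<in> measurable L borel" by (rule meas_cont[OF L(2) cont_map_prod_shift])
  have mfst: "fst \<in> measurable L borel" by (rule meas_cont[OF L(2) continuous_on_fst[OF continuous_on_id]])
  let ?X = "interval_orbit_closure x"
  have "sets \<mu> = sets borel" using L(1) by simp
  moreover have "prob_space \<mu>" using L(1) L.prob_space_distr[OF mcm] by simp
  moreover have "distr \<mu> borel shift = \<mu>"
  proof -
    have "distr \<mu> borel shift = distr L borel (shift \<circ> coord_mult)"
      unfolding L(1) by (rule distr_distr[OF borel_measurable_continuous_onI[OF cont_shift] mcm])
    also have "shift \<circ> coord_mult = coord_mult \<circ> map_prod shift shift"
      by (auto simp: fun_eq_iff shift_def coord_mult_def)
    also have "distr L borel (coord_mult \<circ> map_prod shift shift) = distr (distr L borel (map_prod shift shift)) borel coord_mult"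
      by (rule distr_distr[OF borel_measurable_continuous_onI[OF cont_coord_mult] mmp, symmetric])
    also have "\<dots> = \<mu>" using L(1,4) by simp
    finally show ?thesis .
  qed
  moreover have Xs: "?X \<in> sets \<mu>" using L(1) closed_ioc by simp
  moreover have "measure \<mu> ?X = 1"
  proof -
    let ?C = "closure (range (\<lambda>n. shift_by n x))"
    have "measure \<mu> ?X = measure L (coord_mult -` ?X \<inter> space L)"
      unfolding L(1) by (rule measure_distr[OF mcm]) (simp add: closed_ioc)
    also have "\<dots> \<ge> measure L (fst -` ?C \<inter> space L)"
    proof (rule L.finite_measure_mono)
      show "fst -` ?C \<inter> space L \<subseteq> coord_mult -` ?X \<inter> space L"
        using orbit_sub_ioc[of x] ioc_down coord_mult_le by blast
      show "coord_mult -` ?X \<inter> space L \<in> sets L"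
        using mcm closed_ioc by (auto intro!: measurable_sets)
    qed
    moreover have "measure L (fst -` ?C \<inter> space L) = 1"
    proof -
      have "measure L (fst -` ?C \<inter> space L) = measure (distr L borel fst) ?C"
        by (rule measure_distr[OF mfst, symmetric]) simp
      also have "\<dots> = 1" using L(5) qg_support[OF qg_inf] by simp
      finally show ?thesis .
    qed
    moreover have "measure L (coord_mult -` ?X \<inter> space L) \<le> 1" by (rule L.prob_le_1)
    ultimately show ?thesis by linarith
  qed
  ultimately show "\<mu> \<in> inv_measures ?X" by (simp add: inv_measures_def)
qed

lemma dir2:
  fixes xs :: "nat \<Rightarrow> cfg" and \<nu> :: "nat \<Rightarrow> cfg measure" and \<nu>inf :: "cfg measure"
  assumes Ysub: "\<And>K. K \<ge> 1 \<Longrightarrow> Y \<subseteq> interval_orbit_closure (xs K)"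
    and sub: "\<And>K. K \<ge> 1 \<Longrightarrow> mts_subshift_with_base (interval_orbit_closure (xs K)) (\<nu> K)"
    and wc: "weak_conv_seq \<nu> \<nu>inf"
    and pinf: "prob_space \<nu>inf" and sinf: "sets \<nu>inf = sets borel"
  shows "inv_measures Y \<subseteq> subordinate_measures \<nu>inf"
proof
  fix \<mu> assume \<mu>Y: "\<mu> \<in> inv_measures Y"
  have pmu: "prob_space \<mu>" and smu: "sets \<mu> = sets borel" using \<mu>Y by (auto simp: inv_measures_def)
  have "\<mu> \<in> subordinate_measures (\<nu> (Suc k))" for k
  proof -
    have "\<mu> \<in> inv_measures (interval_orbit_closure (xs (Suc k)))"
      using inv_mono[OF Ysub closed_ioc] \<mu>Y by auto
    then show ?thesis using sub[of "Suc k"] by (simp add: mts_subshift_with_base_def)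
  qed
  then have "\<forall>k. \<exists>L :: (cfg \<times> cfg) measure. \<mu> = distr L borel coord_mult \<and> sets L = sets borel \<and> prob_space L \<and>
        distr L borel (map_prod shift shift) = L \<and> distr L borel fst = \<nu> (Suc k)"
    by (auto simp: subordinate_measures_def)
  then obtain Lf :: "nat \<Rightarrow> (cfg \<times> cfg) measure" where Lf: "\<And>k. \<mu> = distr (Lf k) borel coord_mult"
    "\<And>k. sets (Lf k) = sets borel" "\<And>k. prob_space (Lf k)"
    "\<And>k. distr (Lf k) borel (map_prod shift shift) = Lf k" "\<And>k. distr (Lf k) borel fst = \<nu> (Suc k)"
    by metis
  obtain r Q where r: "strict_mono r" "prob_space Q" "sets Q = sets borel"
    "\<And>f::cfg\<times>cfg \<Rightarrow> real. continuous_on UNIV f \<Longrightarrow> (\<lambda>k. integral\<^sup>L (Lf (r k)) f) \<longlonglongrightarrow> integral\<^sup>L Q f"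
    using compactness[of Lf, OF Lf(3) Lf(2)] by blast
  interpret Q: prob_space Q by (rule r(2))
  have fmQ: "finite_measure Q" by unfold_locales
  have mQ: "g \<in> measurable Q borel" if "continuous_on UNIV g" for g :: "cfg \<times> cfg \<Rightarrow> 'b::topological_space"
    by (rule meas_cont[OF r(3) that])
  have mL: "g \<in> measurable (Lf k) borel" if "continuous_on UNIV g" for g :: "cfg \<times> cfg \<Rightarrow> 'b::topological_space" and k
    by (rule meas_cont[OF Lf(2) that])
  have fmd: "finite_measure (distr Q borel g)" if "continuous_on UNIV g" for g :: "cfg \<times> cfg \<Rightarrow> 'b::topological_space"
    using Q.prob_space_distr[OF mQ[OF that]] by (auto simp: prob_space_def)
  have inv: "distr Q borel (map_prod shift shift) = Q"
  proof (rule meas_eq_cont[OF cz_cfg2 fmd[OF cont_map_prod_shift] fmQ])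
    show "sets (distr Q borel (map_prod shift shift)) = sets borel" by simp
    show "sets Q = sets borel" by (rule r(3))
    fix f :: "cfg \<times> cfg \<Rightarrow> real" assume f: "continuous_on UNIV f"
    have fc: "continuous_on UNIV (\<lambda>p. f (map_prod shift shift p))"
      by (rule continuous_on_compose2[OF f cont_map_prod_shift]) auto
    have e: "integral\<^sup>L (distr M borel (map_prod shift shift)) f = integral\<^sup>L M (\<lambda>p. f (map_prod shift shift p))"
      if "sets M = sets borel" for M :: "(cfg \<times> cfg) measure"
      by (rule integral_distr[OF meas_cont[OF that cont_map_prod_shift] borel_measurable_continuous_onI[OF f]])
    have "(\<lambda>k. integral\<^sup>L (Lf (r k)) (\<lambda>p. f (map_prod shift shift p))) \<longlonglongrightarrow> integral\<^sup>L Q (\<lambda>p. f (map_prod shift shift p))"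
      by (rule r(4)[OF fc])
    moreover have "integral\<^sup>L (Lf k) (\<lambda>p. f (map_prod shift shift p)) = integral\<^sup>L (Lf k) f" for k
      using e[OF Lf(2)[of k]] Lf(4)[of k] by simp
    ultimately have "(\<lambda>k. integral\<^sup>L (Lf (r k)) f) \<longlonglongrightarrow> integral\<^sup>L Q (\<lambda>p. f (map_prod shift shift p))" by simp
    then have "integral\<^sup>L Q (\<lambda>p. f (map_prod shift shift p)) = integral\<^sup>L Q f"
      using r(4)[OF f] LIMSEQ_unique by blast
    then show "integral\<^sup>L (distr Q borel (map_prod shift shift)) f = integral\<^sup>L Q f"
      using e[OF r(3)] by simp
  qed
  have marg: "distr Q borel fst = \<nu>inf"
  proof (rule meas_eq_cont[OF cz_cfg fmd[OF continuous_on_fst[OF continuous_on_id]]])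
    show "finite_measure \<nu>inf" using pinf by (auto simp: prob_space_def)
    show "sets (distr Q borel fst) = sets borel" by simp
    show "sets \<nu>inf = sets borel" by (rule sinf)
    fix f :: "cfg \<Rightarrow> real" assume f: "continuous_on UNIV f"
    have fc: "continuous_on UNIV (\<lambda>p::cfg\<times>cfg. f (fst p))"
      by (rule continuous_on_compose2[OF f continuous_on_fst[OF continuous_on_id]]) auto
    have e: "integral\<^sup>L (distr M borel fst) f = integral\<^sup>L M (\<lambda>p. f (fst p))"
      if "sets M = sets borel" for M :: "(cfg \<times> cfg) measure"
      by (rule integral_distr[OF meas_cont[OF that continuous_on_fst[OF continuous_on_id]] borel_measurable_continuous_onI[OF f]])
    have "(\<lambda>k. integral\<^sup>L (Lf (r k)) (\<lambda>p. f (fst p))) \<longlonglongrightarrow> integral\<^sup>L Q (\<lambda>p. f (fst p))"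
      by (rule r(4)[OF fc])
    moreover have "integral\<^sup>L (Lf k) (\<lambda>p. f (fst p)) = integral\<^sup>L (\<nu> (Suc k)) f" for k
      using e[OF Lf(2)[of k]] Lf(5)[of k] by simp
    ultimately have l1: "(\<lambda>k. integral\<^sup>L (\<nu> (Suc (r k))) f) \<longlonglongrightarrow> integral\<^sup>L Q (\<lambda>p. f (fst p))" by simp
    have "(\<lambda>K. integral\<^sup>L (\<nu> K) f) \<longlonglongrightarrow> integral\<^sup>L \<nu>inf f" using wc f by (simp add: weak_conv_seq_def)
    moreover have "strict_mono (\<lambda>k. Suc (r k))" using r(1) by (simp add: strict_mono_def)
    ultimately have "(\<lambda>k. integral\<^sup>L (\<nu> (Suc (r k))) f) \<longlonglongrightarrow> integral\<^sup>L \<nu>inf f"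
      using LIMSEQ_subseq_LIMSEQ[of "\<lambda>K. integral\<^sup>L (\<nu> K) f"] by (simp add: comp_def)
    then have "integral\<^sup>L Q (\<lambda>p. f (fst p)) = integral\<^sup>L \<nu>inf f" using l1 LIMSEQ_unique by blast
    then show "integral\<^sup>L (distr Q borel fst) f = integral\<^sup>L \<nu>inf f" using e[OF r(3)] by simp
  qed
  have push: "distr Q borel coord_mult = \<mu>"
  proof (rule meas_eq_cont[OF cz_cfg fmd[OF cont_coord_mult]])
    show "finite_measure \<mu>" using pmu by (auto simp: prob_space_def)
    show "sets (distr Q borel coord_mult) = sets borel" by simp
    show "sets \<mu> = sets borel" by (rule smu)
    fix f :: "cfg \<Rightarrow> real" assume f: "continuous_on UNIV f"
    have fc: "continuous_on UNIV (\<lambda>p::cfg\<times>cfg. f (coord_mult p))"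
      by (rule continuous_on_compose2[OF f cont_coord_mult]) auto
    have e: "integral\<^sup>L (distr M borel coord_mult) f = integral\<^sup>L M (\<lambda>p. f (coord_mult p))"
      if "sets M = sets borel" for M :: "(cfg \<times> cfg) measure"
      by (rule integral_distr[OF meas_cont[OF that cont_coord_mult] borel_measurable_continuous_onI[OF f]])
    have "(\<lambda>k. integral\<^sup>L (Lf (r k)) (\<lambda>p. f (coord_mult p))) \<longlonglongrightarrow> integral\<^sup>L Q (\<lambda>p. f (coord_mult p))"
      by (rule r(4)[OF fc])
    moreover have "integral\<^sup>L (Lf k) (\<lambda>p. f (coord_mult p)) = integral\<^sup>L \<mu> f" for k
      using e[OF Lf(2)[of k]] Lf(1)[of k] by simp
    ultimately have "integral\<^sup>L Q (\<lambda>p. f (coord_mult p)) = integral\<^sup>L \<mu> f"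
      using LIMSEQ_unique[OF _ tendsto_const] by fastforce
    then show "integral\<^sup>L (distr Q borel coord_mult) f = integral\<^sup>L \<mu> f" using e[OF r(3)] by simp
  qed
  show "\<mu> \<in> subordinate_measures \<nu>inf"
    unfolding subordinate_measures_def
    using push inv marg r(2,3) by blast
qed

theorem proposition3p9:
  fixes xs :: "nat \<Rightarrow> cfg" and x :: cfg
    and N :: "nat \<Rightarrow> nat" and \<nu> :: "nat \<Rightarrow> cfg measure" and \<nu>inf :: "cfg measure"
  assumes noninc: "\<And>K. K \<ge> 1 \<Longrightarrow> xs (Suc K) \<le> xs K"
    and lim: "\<And>n. eventually (\<lambda>K. xs K n = x n) sequentially"
    and N_incr: "strict_mono N"
    and qg: "\<And>K. K \<ge> 1 \<Longrightarrow> quasi_generic (xs K) (\<nu> K) N"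
    and qg_inf: "quasi_generic x \<nu>inf N"
    and freq: "(\<lambda>K. one_freq (\<nu> K)) \<longlonglongrightarrow> one_freq \<nu>inf"
    and sub: "\<And>K. K \<ge> 1 \<Longrightarrow> mts_subshift_with_base (interval_orbit_closure (xs K)) (\<nu> K)"
  shows "weak_conv_seq \<nu> \<nu>inf
    \<and> mts_subshift_with_base (\<Inter>K\<in>{1..}. interval_orbit_closure (xs K)) \<nu>inf
    \<and> mts_subshift_with_base (interval_orbit_closure x) \<nu>inf"
proof -
  have wc: "weak_conv_seq \<nu> \<nu>inf"
    by (rule weak_conv_main[OF noninc lim N_incr qg qg_inf freq])
  have ninv: "\<nu>inf \<in> inv_measures UNIV" by (rule qg_inv[OF qg_inf N_incr])
  define Y where "Y = (\<Inter>K\<in>{1..}. interval_orbit_closure (xs K))"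
  define X where "X = interval_orbit_closure x"
  have Ysub: "\<And>K. K \<ge> 1 \<Longrightarrow> Y \<subseteq> interval_orbit_closure (xs K)" by (auto simp: Y_def)
  have XY: "X \<subseteq> Y"
    unfolding X_def Y_def
    using ioc_mono[OF x_le_xs[where xs=xs and x=x, OF noninc lim]] by auto
  have clY: "closed Y" unfolding Y_def by (intro closed_INT) (simp add: closed_ioc)
  have d2: "inv_measures Y \<subseteq> subordinate_measures \<nu>inf"
    by (rule dir2[OF Ysub sub wc]) (use qg_inf in \<open>auto simp: quasi_generic_def\<close>)
  have d1: "subordinate_measures \<nu>inf \<subseteq> inv_measures X"
    unfolding X_def by (rule dir1[OF qg_inf])
  have m: "inv_measures X \<subseteq> inv_measures Y" by (rule inv_mono[OF XY clY])
  have eY: "inv_measures Y = subordinate_measures \<nu>inf" using d1 d2 m by blast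
  have eX: "inv_measures X = subordinate_measures \<nu>inf" using d1 d2 m by blast
  show ?thesis
    using wc ninv eY eX subshift_ioc subshift_Inter_ioc
    unfolding mts_subshift_with_base_def X_def Y_def by blast
qed

end
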